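(* Let $G$ be an abelian group of order $v$, and let $m>1$, $k\ge 1$ be integers. A non-disjoint $(v,m,k,1)$-SEDF exists in $G$ if and only if $m=2$ and $v=k^2$.
   Context: Groups are written additively. For subsets $A,B$ of $G$, $\Delta(A,B)$ is the multiset $\{a-b:a\in A,b\in B\}$ and $\lambda G$ is the multiset with each element of $G$ exactly $\lambda$ times. For $G$ of order $v$ and $m>1$, a family of $k$-subsets $\{A_1,\dots,A_m\}$ of $G$ (not required to be disjoint) is a non-disjoint $(v,m,k,\lambda)$-SEDF if for each $1\le i\le m$ the multiset union $\bigcup_{j\neq i}\Delta(A_i,A_j)$ equals $\lambda G$. *)

theory Defs
  imports Main "HOL-Library.Multiset"
begin

definition diff_mset :: "'a::ab_group_add set \<Rightarrow> 'a set \<Rightarrow> 'a multiset" where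
  "diff_mset A B = image_mset (\<lambda>(a, b). a - b) (mset_set (A \<times> B))"

text \<open>Non-disjoint (v,m,k,lam)-SEDF in the finite abelian group 'a (v = CARD('a)),
  given as an indexed family A 0, ..., A (m-1) of k-subsets (not required disjoint).\<close>
definition nd_SEDF :: "(nat \<Rightarrow> 'a::{ab_group_add,finite} set) \<Rightarrow> nat \<Rightarrow> nat \<Rightarrow> nat \<Rightarrow> bool" where
  "nd_SEDF A m k lam \<longleftrightarrow> m > 1 \<and> (\<forall>i<m. card (A i) = k) \<and>
     (\<forall>i<m. (\<Sum>j\<in>{..<m} - {i}. diff_mset (A i) (A j)) = repeat_mset lam (mset_set UNIV))"

end

theory Submission
  imports Defs "HOL-Algebra.Sylow" "HOL-Algebra.Multiplicative_Group"
begin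

definition Gr :: "'a::ab_group_add monoid" where
  "Gr = \<lparr>carrier = UNIV, mult = (+), one = 0\<rparr>"

lemma Gr_simps [simp]: "carrier Gr = UNIV" "mult Gr = (+)" "one Gr = 0"
  by (auto simp: Gr_def)

lemma Gr_comm_group: "comm_group (Gr :: 'a::ab_group_add monoid)"
  by (rule comm_groupI) (auto simp: add.assoc add.commute intro: exI[of _ "- _"])

lemma Gr_inv [simp]: "inv\<^bsub>Gr\<^esub> (x::'a::ab_group_add) = - x"
proof -
  interpret comm_group "Gr :: 'a monoid" by (rule Gr_comm_group)
  show ?thesis by (rule inv_equality) auto
qed

lemma Gr_pow_0 [simp]: "(x::'a::ab_group_add) [^]\<^bsub>Gr\<^esub> (0::nat) = 0"
  by (simp add: nat_pow_def)

lemma Gr_pow_Suc [simp]: "(x::'a::ab_group_add) [^]\<^bsub>Gr\<^esub> (Suc n) = x [^]\<^bsub>Gr\<^esub> n + x"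
  by (simp add: nat_pow_def)

lemma Gr_pow_add: "(x::'a::ab_group_add) [^]\<^bsub>Gr\<^esub> ((m::nat) + n) = x [^]\<^bsub>Gr\<^esub> m + x [^]\<^bsub>Gr\<^esub> n"
  by (induct n rule: nat.induct) (auto simp: add.assoc)

lemma Gr_subgroup_iff:
  "subgroup H (Gr :: 'a::ab_group_add monoid) \<longleftrightarrow>
     0 \<in> H \<and> (\<forall>x\<in>H. \<forall>y\<in>H. x + y \<in> H) \<and> (\<forall>x\<in>H. - x \<in> H)"
  by (auto simp: subgroup_def)

lemma quot_cauchy:
  assumes fin: "finite (UNIV :: 'a::ab_group_add set)"
    and H: "subgroup H (Gr :: 'a monoid)" and p: "prime p"
    and dv: "p dvd card (rcosets\<^bsub>Gr\<^esub> H)"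
  shows "\<exists>g. g \<notin> H \<and> g [^]\<^bsub>Gr\<^esub> p \<in> H"
proof -
  interpret G: comm_group "Gr :: 'a monoid" by (rule Gr_comm_group)
  interpret N: normal H "Gr :: 'a monoid" using G.subgroup_imp_normal[OF H] .
  define Q where "Q = Gr Mod H"
  have gQ: "group Q" unfolding Q_def by (rule N.factorgroup_is_group)
  have cQ: "carrier Q = rcosets\<^bsub>Gr\<^esub> H" by (simp add: Q_def FactGroup_def)
  have finQ: "finite (carrier Q)"
    using fin unfolding cQ RCOSETS_def by simp
  obtain m where m: "card (rcosets\<^bsub>Gr\<^esub> H) = p * m" using dv by blast
  have "sylow Q p 1 m"
    unfolding sylow_eq sylow_axioms_def using gQ p finQ m by (simp add: order_def cQ)
  then obtain P where P: "subgroup P Q" "card P = p"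
    using sylow.sylow_thm by fastforce
  have "\<exists>C\<in>P. C \<noteq> H"
  proof (rule ccontr)
    assume "\<not> ?thesis"
    then have "P \<subseteq> {H}" by auto
    then have "card P \<le> card {H}" by (intro card_mono) auto
    then have "card P \<le> 1" by simp
    with P prime_gt_1_nat[OF p] show False by auto
  qed
  then obtain C where C: "C \<in> P" "C \<noteq> H" by blast
  have gP: "group (Q\<lparr>carrier := P\<rparr>)" using subgroup.subgroup_is_group[OF P(1) gQ] .
  have "C [^]\<^bsub>Q\<lparr>carrier := P\<rparr>\<^esub> order (Q\<lparr>carrier := P\<rparr>) = \<one>\<^bsub>Q\<lparr>carrier := P\<rparr>\<^esub>"
    using group.pow_order_eq_1[OF gP] C by simp
  then have CP: "C [^]\<^bsub>Q\<^esub> p = H"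
    using P by (simp add: order_def nat_pow_def Q_def)
  have "C \<in> carrier Q" using C P subgroup.subset by blast
  then obtain g where g: "C = H #>\<^bsub>Gr\<^esub> g" unfolding cQ RCOSETS_def by auto
  have hom: "(\<lambda>a. H #>\<^bsub>Gr\<^esub> a) \<in> hom Gr Q" unfolding Q_def by (rule N.r_coset_hom_Mod)
  have "H #>\<^bsub>Gr\<^esub> (g [^]\<^bsub>Gr\<^esub> p) = C [^]\<^bsub>Q\<^esub> p"
    using hom_nat_pow[OF hom _ G.is_group gQ] g by simp
  then have "H #>\<^bsub>Gr\<^esub> (g [^]\<^bsub>Gr\<^esub> p) = H" using CP by simp
  then have "g [^]\<^bsub>Gr\<^esub> p \<in> H" using G.coset_join1 H by simp
  moreover have "g \<notin> H" using C g N.rcos_const G.is_group by blast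
  ultimately show ?thesis by blast
qed


lemma Gr_pow_mult_in:
  assumes H: "subgroup H (Gr :: 'a::ab_group_add monoid)" and g: "(g::'a) [^]\<^bsub>Gr\<^esub> (m::nat) \<in> H"
  shows "g [^]\<^bsub>Gr\<^esub> (m * n) \<in> H"
proof (induct n rule: nat.induct)
  case zero then show ?case using H by (simp add: Gr_subgroup_iff)
next
  case (Suc n)
  have "g [^]\<^bsub>Gr\<^esub> (m * Suc n) = g [^]\<^bsub>Gr\<^esub> (m * n) + g [^]\<^bsub>Gr\<^esub> m"
    by (metis Gr_pow_add add.commute mult_Suc_right)
  then show ?case using Suc g H by (simp add: Gr_subgroup_iff)
qed

lemma Gr_pow_coprime:
  assumes H: "subgroup H (Gr :: 'a::ab_group_add monoid)" and p: "prime (p::nat)"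
    and gp: "(g::'a) [^]\<^bsub>Gr\<^esub> p \<in> H" and gs: "g [^]\<^bsub>Gr\<^esub> (s::nat) \<in> H"
    and s: "0 < s" "s < p"
  shows "g \<in> H"
proof -
  have "\<not> p dvd s" using nat_dvd_not_less[OF s] by blast
  then have "coprime p s" using p by (simp add: prime_imp_coprime)
  then have "coprime s p" by (simp add: coprime_commute)
  then have gcd: "gcd s p = 1" by simp
  obtain a b where ab: "s * a = p * b + gcd s p" using bezout_nat[of s p] s by auto
  have "g [^]\<^bsub>Gr\<^esub> (s * a) \<in> H" using Gr_pow_mult_in[OF H gs] .
  moreover have "g [^]\<^bsub>Gr\<^esub> (p * b) \<in> H" using Gr_pow_mult_in[OF H gp] .
  moreover have "g [^]\<^bsub>Gr\<^esub> (s * a) = g [^]\<^bsub>Gr\<^esub> (p * b) + g"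
    using ab gcd Gr_pow_add[of g "p * b" 1] by simp
  ultimately have "g [^]\<^bsub>Gr\<^esub> (s * a) - g [^]\<^bsub>Gr\<^esub> (p * b) \<in> H"
    using H unfolding Gr_subgroup_iff by (metis diff_conv_add_uminus)
  then show ?thesis using \<open>g [^]\<^bsub>Gr\<^esub> (s * a) = _\<close> by simp
qed

lemma add_cyclic:
  assumes fin: "finite (UNIV :: 'a::ab_group_add set)"
    and H: "subgroup H (Gr :: 'a monoid)" and p: "prime p"
    and g: "g \<notin> H" and gp: "g [^]\<^bsub>Gr\<^esub> p \<in> H"
  shows "\<exists>H1. subgroup H1 (Gr :: 'a monoid) \<and> card H1 = p * card H"
proof -
  define f where "f = (\<lambda>(h, i). h + g [^]\<^bsub>Gr\<^esub> (i::nat))"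
  define H1 where "H1 = f ` (H \<times> {..<p})"
  have p1: "p > 1" using p prime_gt_1_nat by blast
  have H0: "0 \<in> H" and Hadd: "\<And>x y. x \<in> H \<Longrightarrow> y \<in> H \<Longrightarrow> x + y \<in> H"
    and Hneg: "\<And>x. x \<in> H \<Longrightarrow> - x \<in> H" using H by (auto simp: Gr_subgroup_iff)
  have Hdiff: "\<And>x y. x \<in> H \<Longrightarrow> y \<in> H \<Longrightarrow> x - y \<in> H"
    by (metis Hadd Hneg diff_conv_add_uminus)
  have mem: "x \<in> H1 \<longleftrightarrow> (\<exists>h\<in>H. \<exists>i<p. x = h + g [^]\<^bsub>Gr\<^esub> i)" for x
    by (auto simp: H1_def f_def image_iff)
  have "subgroup H1 Gr"
    unfolding Gr_subgroup_iff
  proof (intro conjI ballI)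
    show "0 \<in> H1" using H0 p1 mem[of 0] by force
  next
    fix x y assume "x \<in> H1" "y \<in> H1"
    then obtain h i h' j where hi: "h \<in> H" "i < p" "x = h + g [^]\<^bsub>Gr\<^esub> i"
      and hj: "h' \<in> H" "j < p" "y = h' + g [^]\<^bsub>Gr\<^esub> j" by (auto simp: mem)
    have xy: "x + y = (h + h') + g [^]\<^bsub>Gr\<^esub> (i + j)"
      using hi hj Gr_pow_add[of g i j] by (simp add: algebra_simps)
    show "x + y \<in> H1"
    proof (cases "i + j < p")
      case True
      have "h + h' \<in> H" using hi hj Hadd by blast
      then show ?thesis unfolding mem using True xy by blast
    next
      case False
      then have "i + j = p + (i + j - p)" by simp
      then have "g [^]\<^bsub>Gr\<^esub> (i + j) = g [^]\<^bsub>Gr\<^esub> p + g [^]\<^bsub>Gr\<^esub> (i + j - p)"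
        by (metis Gr_pow_add)
      then have "x + y = (h + h' + g [^]\<^bsub>Gr\<^esub> p) + g [^]\<^bsub>Gr\<^esub> (i + j - p)"
        using xy by (simp add: algebra_simps)
      moreover have "i + j - p < p" using hi hj by simp
      moreover have "h + h' + g [^]\<^bsub>Gr\<^esub> p \<in> H" using hi hj Hadd gp by blast
      ultimately show ?thesis unfolding mem by blast
    qed
  next
    fix x assume "x \<in> H1"
    then obtain h i where hi: "h \<in> H" "i < p" "x = h + g [^]\<^bsub>Gr\<^esub> i" by (auto simp: mem)
    show "- x \<in> H1"
    proof (cases "i = 0")
      case True then show ?thesis using hi Hneg p1 by (auto simp: mem intro!: bexI[of _ "- h"] exI[of _ 0])
    next
      case False
      then have "g [^]\<^bsub>Gr\<^esub> p = g [^]\<^bsub>Gr\<^esub> i + g [^]\<^bsub>Gr\<^esub> (p - i)"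
        using hi by (metis Gr_pow_add le_add_diff_inverse less_imp_le_nat)
      then have "- x = (- h - g [^]\<^bsub>Gr\<^esub> p) + g [^]\<^bsub>Gr\<^esub> (p - i)"
        using hi by (simp add: algebra_simps)
      moreover have "- h - g [^]\<^bsub>Gr\<^esub> p \<in> H" using Hdiff Hneg hi gp by blast
      moreover have "p - i < p" using False hi by simp
      ultimately show ?thesis by (auto simp: mem)
    qed
  qed
  moreover have "inj_on f (H \<times> {..<p})"
  proof -
    have key: "h = h' \<and> i = j" if "h \<in> H" "h' \<in> H" "i < p" "j < p" "i \<le> j"
      "h + g [^]\<^bsub>Gr\<^esub> i = h' + g [^]\<^bsub>Gr\<^esub> j" for h h' i j
    proof -
      have "g [^]\<^bsub>Gr\<^esub> j = g [^]\<^bsub>Gr\<^esub> i + g [^]\<^bsub>Gr\<^esub> (j - i)"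
        using that by (metis Gr_pow_add le_add_diff_inverse)
      then have e: "g [^]\<^bsub>Gr\<^esub> (j - i) = h - h'" using that(6) by (simp add: algebra_simps)
      have "i = j"
      proof (rule ccontr)
        assume "i \<noteq> j"
        then have "0 < j - i" "j - i < p" using that by auto
        moreover have "g [^]\<^bsub>Gr\<^esub> (j - i) \<in> H" using e Hdiff that by simp
        ultimately have "g \<in> H" using Gr_pow_coprime[OF H p gp] by blast
        with g show False by simp
      qed
      then show ?thesis using that by simp
    qed
    show ?thesis unfolding inj_on_def f_def
      by (clarsimp, metis key nat_le_linear)
  qed
  then have "card H1 = card H * p"
    unfolding H1_def by (simp add: card_image card_cartesian_product)
  ultimately show ?thesis by (auto simp: mult.commute)
qed

lemma grow:
  assumes fin: "finite (UNIV :: 'a::ab_group_add set)"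
  shows "subgroup H (Gr :: 'a monoid) \<Longrightarrow> d dvd card (rcosets\<^bsub>Gr\<^esub> H)
     \<Longrightarrow> \<exists>K. subgroup K (Gr :: 'a monoid) \<and> card K = d * card H"
proof (induct d arbitrary: H rule: less_induct)
  case (less d H)
  interpret G: comm_group "Gr :: 'a monoid" by (rule Gr_comm_group)
  have lag: "card (rcosets\<^bsub>Gr\<^esub> H) * card H = card (UNIV :: 'a set)"
    using G.lagrange[OF less.prems(1)] by (simp add: order_def)
  have cpos: "card (UNIV :: 'a set) > 0" using fin by (simp add: card_gt_0_iff)
  show ?case
  proof (cases "d = 1")
    case True then show ?thesis using less.prems by auto
  next
    case False
    then obtain p where p: "prime p" "p dvd d" using prime_factor_nat by blast
    then have "p dvd card (rcosets\<^bsub>Gr\<^esub> H)" using less.prems dvd_trans by blast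
    then obtain g where g: "g \<notin> H" "g [^]\<^bsub>Gr\<^esub> p \<in> H"
      using quot_cauchy[OF fin less.prems(1) p(1)] by blast
    obtain H1 where H1: "subgroup H1 (Gr :: 'a monoid)" "card H1 = p * card H"
      using add_cyclic[OF fin less.prems(1) p(1) g] by blast
    have lag1: "card (rcosets\<^bsub>Gr\<^esub> H1) * card H1 = card (UNIV :: 'a set)"
      using G.lagrange[OF H1(1)] by (simp add: order_def)
    have "card H > 0" using lag cpos by (metis mult_is_0 neq0_conv)
    then have c1: "card (rcosets\<^bsub>Gr\<^esub> H1) * p = card (rcosets\<^bsub>Gr\<^esub> H)"
      using lag lag1 H1(2) by (metis mult.assoc mult.commute mult_right_cancel not_gr0)
    obtain d' where d': "d = p * d'" using p by blast
    have dpos: "d > 0" using less.prems(2) lag cpos by (metis dvd_0_left_iff mult_is_0 neq0_conv)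
    have "d' < d" using d' dpos prime_gt_1_nat[OF p(1)] by simp
    moreover have "d' dvd card (rcosets\<^bsub>Gr\<^esub> H1)"
    proof -
      have "p * d' dvd p * card (rcosets\<^bsub>Gr\<^esub> H1)"
        using less.prems(2) c1 d' by (simp add: mult.commute)
      then show ?thesis using prime_gt_1_nat[OF p(1)] by simp
    qed
    ultimately obtain K where "subgroup K (Gr :: 'a monoid)" "card K = d' * card H1"
      using less.hyps H1(1) by blast
    then show ?thesis using H1(2) d' by (auto simp: mult.assoc mult.left_commute)
  qed
qed


lemma subgroup_k:
  assumes fin: "finite (UNIV :: 'a::ab_group_add set)" and k: "card (UNIV :: 'a set) = k ^ 2"
  shows "\<exists>K::'a set. 0 \<in> K \<and> (\<forall>x\<in>K. \<forall>y\<in>K. x + y \<in> K) \<and> (\<forall>x\<in>K. - x \<in> K) \<and> card K = k"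
proof -
  interpret G: comm_group "Gr :: 'a monoid" by (rule Gr_comm_group)
  have H0: "subgroup {0} (Gr :: 'a monoid)" by (simp add: Gr_subgroup_iff)
  have "card (rcosets\<^bsub>Gr\<^esub> {0::'a}) * 1 = k ^ 2"
    using G.lagrange[OF H0] k by (simp add: order_def)
  then have "k dvd card (rcosets\<^bsub>Gr\<^esub> {0::'a})" by (simp add: power2_eq_square)
  then obtain K where "subgroup K (Gr :: 'a monoid)" "card K = k * card {0::'a}"
    using grow[OF fin H0] by blast
  then show ?thesis by (auto simp: Gr_subgroup_iff)
qed

lemma diff_mset_mem:
  assumes "finite A" "finite B"
  shows "x \<in># diff_mset A B \<longleftrightarrow> (\<exists>a\<in>A. \<exists>b\<in>B. x = a - b)"
  using assms by (auto simp: diff_mset_def)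

lemma size_diff_mset:
  assumes "finite A" "finite B"
  shows "size (diff_mset A B) = card A * card B"
  using assms by (simp add: diff_mset_def card_cartesian_product)

lemma mem_sum_mset:
  assumes "finite S"
  shows "x \<in># (\<Sum>j\<in>S. F j) \<longleftrightarrow> (\<exists>j\<in>S. x \<in># F j)"
  using assms by (induct S rule: finite_induct) auto

lemma forward:
  fixes A :: "nat \<Rightarrow> 'a::{ab_group_add,finite} set"
  assumes nd: "nd_SEDF A m k 1" and k: "k \<ge> 1"
  shows "m = 2 \<and> card (UNIV :: 'a set) = k ^ 2"
proof -
  have m: "m > 1" and cA: "\<And>i. i < m \<Longrightarrow> card (A i) = k"
    and S: "\<And>i. i < m \<Longrightarrow> (\<Sum>j\<in>{..<m} - {i}. diff_mset (A i) (A j)) = mset_set UNIV"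
    using nd by (auto simp: nd_SEDF_def)
  have fA: "\<And>i. i < m \<Longrightarrow> finite (A i)" using cA k by (metis card.infinite not_one_le_zero)
  have "size (\<Sum>j\<in>{..<m} - {0}. diff_mset (A 0) (A j)) = card (UNIV :: 'a set)"
    using S[of 0] m by (simp add: size_mset_set)
  moreover have "size (\<Sum>j\<in>{..<m} - {0}. diff_mset (A 0) (A j)) = (\<Sum>j\<in>{..<m} - {0}. k * k)"
    unfolding size_multiset_sum
    by (rule sum.cong) (use m cA in \<open>auto simp: size_diff_mset\<close>)
  ultimately have card: "card (UNIV :: 'a set) = (m - 1) * (k * k)" using m by simp
  have "m = 2"
  proof (rule ccontr)
    assume "m \<noteq> 2"
    with m have m3: "m \<ge> 3" by simp
    have "0 \<in># (\<Sum>j\<in>{..<m} - {0}. diff_mset (A 0) (A j))" using S[of 0] m by simp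
    then obtain j where j: "j < m" "j \<noteq> 0" "0 \<in># diff_mset (A 0) (A j)"
      by (auto simp: mem_sum_mset)
    then obtain x where x: "x \<in> A 0" "x \<in> A j" using fA[of 0] fA[of j] m
      by (auto simp: diff_mset_mem)
    obtain l where l: "l < m" "l \<noteq> 0" "l \<noteq> j"
    proof (cases "j = 1")
      case True then show ?thesis using that[of 2] m3 by auto
    next
      case False then show ?thesis using that[of 1] m3 j by auto
    qed
    have "A l \<noteq> {}" using cA[OF l(1)] k by auto
    then obtain y where y: "y \<in> A l" by blast
    let ?F = "\<lambda>j'. diff_mset (A l) (A j')"
    have c1: "count (?F 0) (y - x) \<ge> 1"
      using diff_mset_mem[OF fA[OF l(1)] fA[of 0]] x y m by (auto simp: Suc_le_eq)
    have c2: "count (?F j) (y - x) \<ge> 1"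
      using diff_mset_mem[OF fA[OF l(1)] fA[OF j(1)]] x y by (auto simp: Suc_le_eq)
    have e1: "count (\<Sum>j'\<in>{..<m} - {l}. ?F j') (y - x) = (\<Sum>j'\<in>{..<m} - {l}. count (?F j') (y - x))"
      by (simp add: count_sum)
    have e2: "(\<Sum>j'\<in>{0, j}. count (?F j') (y - x)) \<le> (\<Sum>j'\<in>{..<m} - {l}. count (?F j') (y - x))"
      by (rule sum_mono2) (use l j m in auto)
    have e3: "(\<Sum>j'\<in>{0, j}. count (?F j') (y - x)) = count (?F 0) (y - x) + count (?F j) (y - x)"
      using j(2) by simp
    have "count (\<Sum>j'\<in>{..<m} - {l}. ?F j') (y - x) \<ge> 2" using e1 e2 e3 c1 c2 by linarith
    moreover have "count (\<Sum>j'\<in>{..<m} - {l}. ?F j') (y - x) = 1" using S[OF l(1)] by simp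
    ultimately show False by simp
  qed
  then show ?thesis using card by (simp add: power2_eq_square)
qed

lemma backward:
  assumes k: "card (UNIV :: 'a::{ab_group_add,finite} set) = k ^ 2" "k \<ge> 1"
  shows "\<exists>A :: nat \<Rightarrow> 'a set. nd_SEDF A 2 k 1"
proof -
  obtain K :: "'a set" where K0: "0 \<in> K" and Kadd: "\<forall>x\<in>K. \<forall>y\<in>K. x + y \<in> K"
    and Kneg: "\<forall>x\<in>K. - x \<in> K" and cK: "card K = k"
    using subgroup_k[OF _ k(1)] by auto
  have Kdiff: "x - y \<in> K" if "x \<in> K" "y \<in> K" for x y
  proof -
    have "x + - y \<in> K" using Kadd Kneg that by blast
    then show ?thesis by simp
  qed
  define r where "r u = (SOME y. u + y \<in> K)" for u :: 'a
  have r1: "u + r u \<in> K" for u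
    unfolding r_def by (rule someI[of _ "- u"]) (simp add: K0)
  have r2: "r u = r u'" if "u - u' \<in> K" for u u'
  proof -
    have "(\<lambda>y. u + y \<in> K) = (\<lambda>y. u' + y \<in> K)"
    proof
      fix y
      show "(u + y \<in> K) = (u' + y \<in> K)"
      proof
        assume h: "u + y \<in> K"
        have "(u + y) - (u - u') \<in> K" using Kdiff h that by blast
        moreover have "(u + y) - (u - u') = u' + y" by (simp add: algebra_simps)
        ultimately show "u' + y \<in> K" by simp
      next
        assume h: "u' + y \<in> K"
        have "(u - u') + (u' + y) \<in> K" using Kadd h that by blast
        moreover have "(u - u') + (u' + y) = u + y" by (simp add: algebra_simps)
        ultimately show "u + y \<in> K" by simp
      qed
    qed
    then show ?thesis unfolding r_def by simp
  qed
  define T where "T = range r"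
  define f where "f = (\<lambda>(a, t). a - t :: 'a)"
  have inj: "inj_on f (K \<times> T)"
  proof (rule inj_onI, clarsimp simp: f_def T_def)
    fix a a' u u' assume a: "a \<in> K" "a' \<in> K" and e: "a - r u = a' - r u'"
    have eq: "u - u' = (u + r u) - (u' + r u') + (a' - a)" using e by (simp add: algebra_simps)
    moreover have "(u + r u) - (u' + r u') \<in> K" using r1 Kdiff by blast
    moreover have "a' - a \<in> K" using a Kdiff by blast
    ultimately have "u - u' \<in> K" unfolding eq using Kadd by blast
    then have "r u = r u'" by (rule r2)
    then show "a = a' \<and> r u = r u'" using e by simp
  qed
  have surj: "f ` (K \<times> T) = UNIV"
  proof -
    have "x \<in> f ` (K \<times> T)" for x
    proof -
      have "x = f (x + r x, r x)" by (simp add: f_def)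
      moreover have "(x + r x, r x) \<in> K \<times> T" using r1 by (auto simp: T_def)
      ultimately show ?thesis by blast
    qed
    then show ?thesis by auto
  qed
  have "card K * card T = k ^ 2"
    using card_image[OF inj] surj k(1) by (simp add: card_cartesian_product)
  then have cT: "card T = k" using cK k(2) by (simp add: power2_eq_square)
  have D1: "diff_mset K T = mset_set UNIV"
    unfolding diff_mset_def using image_mset_mset_set[OF inj] surj by (simp add: f_def)
  define f' where "f' = (\<lambda>(t, a). t - a :: 'a)"
  have inj': "inj_on f' (T \<times> K)"
  proof (rule inj_onI, clarify)
    fix t a t' a' assume h: "t \<in> T" "a \<in> K" "t' \<in> T" "a' \<in> K" "f' (t, a) = f' (t', a')"
    then have "t - a = t' - a'" by (simp add: f'_def)
    then have "- (t - a) = - (t' - a')" by simp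
    then have "f (a, t) = f (a', t')" by (simp add: f_def)
    then have "(a, t) = (a', t')" using inj_onD[OF inj] h by blast
    then show "t = t' \<and> a = a'" by simp
  qed
  have surj': "f' ` (T \<times> K) = UNIV"
  proof -
    have "x \<in> f' ` (T \<times> K)" for x
    proof -
      have "- x \<in> f ` (K \<times> T)" using surj by simp
      then obtain a t where "(a, t) \<in> K \<times> T" "- x = f (a, t)" by auto
      then have "x = f' (t, a)" "(t, a) \<in> T \<times> K"
        by (auto simp: f_def f'_def) (metis minus_diff_eq minus_minus)
      then show ?thesis by blast
    qed
    then show ?thesis by auto
  qed
  have D2: "diff_mset T K = mset_set UNIV"
    unfolding diff_mset_def using image_mset_mset_set[OF inj'] surj' by (simp add: f'_def)
  define A where "A i = (if i = 0 then K else T)" for i :: nat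
  have "{..<2::nat} - {0} = {1}" "{..<2::nat} - {1} = {0}" by auto
  then have "nd_SEDF A 2 k 1"
    unfolding nd_SEDF_def using D1 D2 cK cT
    by (auto simp: A_def less_2_cases_iff)
  then show ?thesis by blast
qed

theorem theorem2p10:
  fixes m k :: nat
  assumes "m > 1" and "k \<ge> 1"
  shows "(\<exists>A :: nat \<Rightarrow> 'a::{ab_group_add,finite} set. nd_SEDF A m k 1)
           \<longleftrightarrow> (m = 2 \<and> card (UNIV :: 'a set) = k ^ 2)"
  using forward[OF _ assms(2)] backward[OF _ assms(2)] by blast

end
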